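(* There is a constant $K$ such that the following holds for all $N,d\in\mathbb{N}$, all integers $r<s$ with $d\le r,s\le N-d$, and every fixed partition $Q$ of $\{pr,\ldots,ps-1\}$ into rods. Let $\mathcal{E}_{rs}$ be the event that $pr$ and $ps$ are renewal points of the partition and that its restriction to $\{pr,\ldots,ps-1\}$ equals $Q$; this event makes sense both in $\mathcal{P}_N$ and in $\mathcal{P}_\infty$. Then $$\bigl|\mathbb{P}_N(\mathcal{E}_{rs})-\mathbb{P}(\mathcal{E}_{rs})\bigr|\le K\,\mathbb{P}_N(\mathcal{E}_{rs})\sup_{k\ge d}|u_k-\mu^{-1}| .$$
   Context: Setting. Let $R,\ell>0$, $p\in\mathbb{N}$ and $\gamma=\ell/R$. $\mathcal{Z}=\mathbb{R}\times[0,2\pi R]$. Laughlin's function. $$\Psi_N=\kappa_N\prod_{j<k}\bigl(e^{z_k/R}-e^{z_j/R}\bigr)^p e^{-\sum x_k^2/(2\ell^2)},$$ with $$\kappa_N=(N!)^{-1/2}(2\pi R\ell\sqrt\pi)^{-N/2}\exp\Bigl(-\tfrac12p^2\gamma^2\sum_{j=1}^N(j-1)^2\Bigr),$$ and $C_N=\|\Psi_N\|^2_{L^2(\mathcal{Z}^N)}$. Orthonormal orbitals. $\psi_k(z)\propto e^{kz/R}e^{-x^2/(2\ell^2)}$ for $k\in\mathbb{Z}$. The expansion $$\Psi_N=(N!)^{-1/2}\sum_{\mathbf m\in\{0,\ldots,pN-p\}^N}a_N(\mathbf m)\,\psi_{m_1}(z_1)\cdots\psi_{m_N}(z_N)$$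 defines coefficients $a_N(\mathbf m)$. Renewal points of tuples. For $\mathbf m$ with increasing rearrangement $m_{\sigma(1)}\le\cdots\le m_{\sigma(N)}$, a number $pk$ with $0\le k\le N$ is a renewal point of $\mathbf m$ if $\sum_{j=1}^k m_{\sigma(j)}=pk(k-1)/2$. Renewal weights. Let $$\alpha_n=\frac1{n!}\sum|a_n(\mathbf m)|^2,$$ summed over $\mathbf m$ whose only renewal points are $0$ and $pn$. Let $r=r(p,\gamma)=\exp(-\lim_N\frac1N\ln C_N)$ and $p_n=\alpha_nr^n$. It is known that: - $C_N=\sum_{n_1+\cdots+n_D=N}\alpha_{n_1}\cdots\alpha_{n_D}$; - $\sum_n p_n=1$; - $\mu:=\sum_n np_n<\infty$; - $u_N:=C_Nr^N=\sum_{n_1+\cdots+n_D=N}p_{n_1}\cdots p_{n_D}$ satisfies $u_N\to\mu^{-1}$. Partitions. A rod is a set $\{pj,\ldots,pj+pn-1\}$ with $j\in\mathbb{Z}$ and $n\ge1$. $\mathcal{P}_N$ is the set of partitions of $\{0,\ldots,pN-1\}$ into rods $X_1,\ldots,X_D$ (labeled left to right). The renewal points of such a partition are the left endpoints of its rods together with $pN$. If the rods have lengths $pn_1,\ldots,pn_D$, the partition gets weight $p_{n_1}\cdots p_{n_D}/u_N$; this defines a probability measure $\mathbb{P}_N$ on $\mathcal{P}_N$. Stationary process. $\mathcal{P}_\infty$ is the set of partitions of $\mathbb{Z}$ into rods, with renewal points the left endpoints of the rods. $\mathbb{P}$ is the $p$-periodic stationary renewal process on $\mathcal{P}_\infty$: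 for every $j\in\mathbb{Z}$ and $n_1,\ldots,n_D$, the probability that $pj$ is a renewal point and the next $D$ rods have lengths $pn_1,\ldots,pn_D$ equals $\mu^{-1}p_{n_1}\cdots p_{n_D}$. *)

theory Defs
  imports "HOL-Probability.Probability" "HOL-Library.Disjoint_Sets" "HOL-Library.FuncSet"
begin

text \<open>Pairs (j,k) with j<k<N (0-based indices of the N particles).\<close>
definition laugh_pairs :: "nat \<Rightarrow> (nat \<times> nat) set" where
  "laugh_pairs N = {(j,k). j < k \<and> k < N}"

text \<open>Expanding each factor (w_k - w_j)^p = sum_a binom(p,a) w_k^a (-w_j)^(p-a),
  a choice function a assigns to each pair the exponent of w_k; this is the
  resulting exponent of w_i.\<close>
definition laugh_exp :: "nat \<Rightarrow> nat \<Rightarrow> (nat \<times> nat \<Rightarrow> nat) \<Rightarrow> nat \<Rightarrow> nat" where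
  "laugh_exp p N a i = (\<Sum>j<i. a (j,i)) + (\<Sum>k\<in>{i<..<N}. p - a (i,k))"

text \<open>Coefficient of prod_i w_i^(m i) in prod_{j<k}(w_k - w_j)^p.\<close>
definition laugh_coeff :: "nat \<Rightarrow> nat \<Rightarrow> (nat \<Rightarrow> nat) \<Rightarrow> real" where
  "laugh_coeff p N m =
     (\<Sum>a \<in> laugh_pairs N \<rightarrow>\<^sub>E {0..p}.
        if (\<forall>i<N. laugh_exp p N a i = m i)
        then (\<Prod>jk\<in>laugh_pairs N. real (p choose a jk) * (-1) ^ (p - a jk))
        else 0)"

text \<open>The normalization constant kappa_N of Laughlin's function (gamma = l/R).\<close>
definition laugh_kappa :: "nat \<Rightarrow> real \<Rightarrow> real \<Rightarrow> nat \<Rightarrow> real" where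
  "laugh_kappa p R l N =
     (1 / sqrt (fact N)) * (2 * pi * R * l * sqrt pi) powr (- real N / 2)
     * exp (- (1/2) * (real p)^2 * (l/R)^2 * (\<Sum>j=1..N. (real j - 1)^2))"

text \<open>L2 norm of e^{kz/R} e^{-x^2/(2 l^2)} on Z = R x [0, 2 pi R]; the orthonormal
  orbital is psi_k = (that function) / laugh_orbnorm.\<close>
definition laugh_orbnorm :: "real \<Rightarrow> real \<Rightarrow> nat \<Rightarrow> real" where
  "laugh_orbnorm R l k = sqrt (2 * pi * R * l * sqrt pi * exp ((l/R)^2 * (real k)^2))"

text \<open>Coefficients a_N(m) of the expansion of Psi_N in the orthonormal basis.\<close>
definition laugh_a :: "nat \<Rightarrow> real \<Rightarrow> real \<Rightarrow> nat \<Rightarrow> (nat \<Rightarrow> nat) \<Rightarrow> real" where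
  "laugh_a p R l N m =
     sqrt (fact N) * laugh_kappa p R l N * laugh_coeff p N m
     * (\<Prod>i<N. laugh_orbnorm R l (m i))"

definition laugh_tuples :: "nat \<Rightarrow> nat \<Rightarrow> (nat \<Rightarrow> nat) set" where
  "laugh_tuples p N = {0..<N} \<rightarrow>\<^sub>E {0..p*N-p}"

definition tuple_renewal :: "nat \<Rightarrow> nat \<Rightarrow> (nat \<Rightarrow> nat) \<Rightarrow> nat \<Rightarrow> bool" where
  "tuple_renewal p N m k \<longleftrightarrow>
     k \<le> N \<and> 2 * sum_list (take k (sort (map m [0..<N]))) = p * k * (k - 1)"

definition laugh_alpha :: "nat \<Rightarrow> real \<Rightarrow> real \<Rightarrow> nat \<Rightarrow> real" where
  "laugh_alpha p R l n =
     (1 / fact n) * (\<Sum>m \<in> {m \<in> laugh_tuples p n. {k. tuple_renewal p n m k} = {0, n}}.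
                       (laugh_a p R l n m)^2)"

text \<open>C_N = ||Psi_N||^2, computed via orthonormality of the product orbitals.\<close>
definition laugh_C :: "nat \<Rightarrow> real \<Rightarrow> real \<Rightarrow> nat \<Rightarrow> real" where
  "laugh_C p R l N = (1 / fact N) * (\<Sum>m \<in> laugh_tuples p N. (laugh_a p R l N m)^2)"

definition laugh_r :: "nat \<Rightarrow> real \<Rightarrow> real \<Rightarrow> real" where
  "laugh_r p R l = exp (- lim (\<lambda>N. ln (laugh_C p R l N) / real N))"

text \<open>p_n = alpha_n r^n for n \<ge> 1 (p_0 := 0, it never occurs).\<close>
definition lpw :: "nat \<Rightarrow> real \<Rightarrow> real \<Rightarrow> nat \<Rightarrow> real" where
  "lpw p R l n = (if n = 0 then 0 else laugh_alpha p R l n * (laugh_r p R l) ^ n)"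

definition compositions :: "nat \<Rightarrow> nat list set" where
  "compositions N = {ns. (\<forall>x\<in>set ns. 0 < x) \<and> sum_list ns = N}"

definition lu :: "nat \<Rightarrow> real \<Rightarrow> real \<Rightarrow> nat \<Rightarrow> real" where
  "lu p R l N = (\<Sum>ns \<in> compositions N. prod_list (map (lpw p R l) ns))"

definition lmu :: "nat \<Rightarrow> real \<Rightarrow> real \<Rightarrow> real" where
  "lmu p R l = (\<Sum>n. real n * lpw p R l n)"

definition is_rod :: "nat \<Rightarrow> int set \<Rightarrow> bool" where
  "is_rod p X \<longleftrightarrow> (\<exists>j::int. \<exists>n::nat. n \<ge> 1 \<and> X = {int p * j ..< int p * j + int p * int n})"

definition rodpart_fin :: "nat \<Rightarrow> nat \<Rightarrow> int set set set" where
  "rodpart_fin p N = {P. partition_on {0..<int p * int N} P \<and> (\<forall>X\<in>P. is_rod p X)}"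

definition rodpart_inf :: "nat \<Rightarrow> int set set set" where
  "rodpart_inf p = {P. partition_on UNIV P \<and> (\<forall>X\<in>P. is_rod p X)}"

definition renewal_fin :: "nat \<Rightarrow> nat \<Rightarrow> int set set \<Rightarrow> int \<Rightarrow> bool" where
  "renewal_fin p N P x \<longleftrightarrow> (\<exists>X\<in>P. x = Min X) \<or> x = int p * int N"

definition renewal_inf :: "int set set \<Rightarrow> int \<Rightarrow> bool" where
  "renewal_inf P x \<longleftrightarrow> (\<exists>X\<in>P. x = Min X)"

definition restr :: "int set set \<Rightarrow> int set \<Rightarrow> int set set" where
  "restr P S = {X \<inter> S | X. X \<in> P \<and> X \<inter> S \<noteq> {}}"

definition PN_prob :: "nat \<Rightarrow> real \<Rightarrow> real \<Rightarrow> nat \<Rightarrow> int set set set \<Rightarrow> real" where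
  "PN_prob p R l N A =
     (\<Sum>P \<in> rodpart_fin p N \<inter> A. (\<Prod>X\<in>P. lpw p R l (card X div p)) / lu p R l N)"

definition event_fin :: "nat \<Rightarrow> nat \<Rightarrow> nat \<Rightarrow> nat \<Rightarrow> int set set \<Rightarrow> int set set set" where
  "event_fin p N r s Q = {P \<in> rodpart_fin p N.
      renewal_fin p N P (int p * int r) \<and> renewal_fin p N P (int p * int s)
      \<and> restr P {int p * int r ..< int p * int s} = Q}"

definition event_inf :: "nat \<Rightarrow> nat \<Rightarrow> nat \<Rightarrow> int set set \<Rightarrow> int set set set" where
  "event_inf p r s Q = {P \<in> rodpart_inf p.
      renewal_inf P (int p * int r) \<and> renewal_inf P (int p * int s)
      \<and> restr P {int p * int r ..< int p * int s} = Q}"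

text \<open>Event: pj is a renewal point and the next rods have lengths p*ns!0, p*ns!1, ...\<close>
definition cyl :: "nat \<Rightarrow> int \<Rightarrow> nat list \<Rightarrow> int set set set" where
  "cyl p j ns = {P \<in> rodpart_inf p. \<forall>k < length ns.
      {int p * j + int p * int (sum_list (take k ns)) ..<
       int p * j + int p * int (sum_list (take (Suc k) ns))} \<in> P}"

text \<open>M is (a realisation of) the p-periodic stationary renewal process P on P_infinity.\<close>
definition stationary_renewal :: "nat \<Rightarrow> real \<Rightarrow> real \<Rightarrow> int set set measure \<Rightarrow> bool" where
  "stationary_renewal p R l M \<longleftrightarrow>
     prob_space M \<and> space M = rodpart_inf p \<and>
     (\<forall>j ns. ns \<noteq> [] \<and> (\<forall>n\<in>set ns. 0 < n) \<longrightarrow>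
        cyl p j ns \<in> sets M \<and>
        measure M (cyl p j ns) = (1 / lmu p R l) * prod_list (map (lpw p R l) ns))"

end

theory Submission
  imports Defs
begin

fun rods_of :: "nat \<Rightarrow> int \<Rightarrow> nat list \<Rightarrow> int set set" where
  "rods_of p a [] = {}"
| "rods_of p a (n#ns) = insert {int p * a ..< int p * a + int p * int n} (rods_of p (a + int n) ns)"

definition pos :: "nat list \<Rightarrow> bool" where "pos ns \<longleftrightarrow> (\<forall>x\<in>set ns. 0 < x)"

lemma pos_simps[simp]: "pos []" "pos (n#ns) \<longleftrightarrow> 0 < n \<and> pos ns" "pos (xs@ys) \<longleftrightarrow> pos xs \<and> pos ys"
  by (auto simp: pos_def)

lemma rods_of_sub:
  assumes "p \<ge> 1" "pos ns" "X \<in> rods_of p a ns"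
  shows "X \<subseteq> {int p * a ..< int p * a + int p * int (sum_list ns)} \<and> X \<noteq> {} \<and> is_rod p X"
  using assms
proof (induction ns arbitrary: a)
  case Nil then show ?case by simp
next
  case (Cons n ns)
  show ?case
  proof (cases "X = {int p * a ..< int p * a + int p * int n}")
    case True
    then show ?thesis using Cons.prems unfolding is_rod_def
      by (auto intro!: exI[of _ a] exI[of _ n])
  next
    case False
    then have "X \<in> rods_of p (a + int n) ns" using Cons.prems by simp
    from Cons.IH[OF Cons.prems(1) _ this] Cons.prems(2)
    have h: "X \<subseteq> {int p * (a + int n) ..< int p * (a + int n) + int p * int (sum_list ns)} \<and> X \<noteq> {} \<and> is_rod p X" by simp
    have "{int p * (a + int n) ..< int p * (a + int n) + int p * int (sum_list ns)} \<subseteq> {int p * a ..< int p * a + int p * int (sum_list (n#ns))}"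
      by (auto simp: algebra_simps)
    with h show ?thesis by blast
  qed
qed

lemma rods_of_partition:
  assumes "p \<ge> 1" "pos ns"
  shows "partition_on {int p * a ..< int p * a + int p * int (sum_list ns)} (rods_of p a ns)"
  using assms
proof (induction ns arbitrary: a)
  case Nil then show ?case by (simp add: partition_on_empty)
next
  case (Cons n ns)
  let ?H = "{int p * a ..< int p * a + int p * int n}"
  have IH: "partition_on {int p * (a + int n) ..< int p * (a + int n) + int p * int (sum_list ns)} (rods_of p (a + int n) ns)"
    using Cons by simp
  have U: "\<Union>(rods_of p (a + int n) ns) = {int p * (a + int n) ..< int p * (a + int n) + int p * int (sum_list ns)}"
    using partition_onD1[OF IH] by simp
  have "disjnt ?H (\<Union>(rods_of p (a + int n) ns))"
    unfolding U by (auto simp: disjnt_def algebra_simps)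
  moreover have "{int p * a ..< int p * a + int p * int (sum_list (n#ns))} - ?H
     = {int p * (a + int n) ..< int p * (a + int n) + int p * int (sum_list ns)}"
    by (auto simp: algebra_simps)
  moreover have "?H \<noteq> {}" using Cons.prems by simp
  ultimately show ?case using IH
    by (simp add: partition_on_insert) (auto simp: algebra_simps)
qed

lemma rods_of_append:
  "rods_of p a (xs @ ys) = rods_of p a xs \<union> rods_of p (a + int (sum_list xs)) ys"
  by (induction xs arbitrary: a) (auto simp: algebra_simps)

lemma rods_of_finite: "finite (rods_of p a ns)"
  by (induction ns arbitrary: a) auto

lemma rods_of_weight:
  assumes "p \<ge> 1" "pos ns"
  shows "(\<Prod>X\<in>rods_of p a ns. f (card X div p)) = prod_list (map f ns)"
  using assms
proof (induction ns arbitrary: a)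
  case Nil then show ?case by simp
next
  case (Cons n ns)
  let ?H = "{int p * a ..< int p * a + int p * int n}"
  have "?H \<notin> rods_of p (a + int n) ns"
  proof
    assume "?H \<in> rods_of p (a + int n) ns"
    from rods_of_sub[OF Cons.prems(1) _ this] Cons.prems
    have "?H \<subseteq> {int p * (a + int n) ..}" by auto
    moreover have "int p * a \<in> ?H" using Cons.prems by simp
    ultimately have "int p * a \<ge> int p * (a + int n)" by blast
    moreover have "int p * int n > 0" using Cons.prems by simp
    ultimately show False by (simp add: algebra_simps)
  qed
  moreover have "card ?H div p = n" using Cons.prems by (simp add: nat_mult_distrib)
  ultimately show ?case using Cons by (simp add: rods_of_finite)
qed

lemma rods_decomp:
  assumes "p \<ge> 1"
  shows "partition_on {int p * a ..< int p * a + int p * int k} Q \<Longrightarrow> (\<forall>X\<in>Q. is_rod p X)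
    \<Longrightarrow> \<exists>ns. pos ns \<and> sum_list ns = k \<and> Q = rods_of p a ns"
proof (induction k arbitrary: a Q rule: less_induct)
  case (less k a Q)
  show ?case
  proof (cases "k = 0")
    case True
    then have "Q = {}" using less.prems(1) by (simp add: partition_on_empty)
    then show ?thesis using True by (intro exI[of _ "[]"]) simp
  next
    case False
    have pa: "int p * a \<in> {int p * a ..< int p * a + int p * int k}" using False assms by simp
    then obtain X where X: "X \<in> Q" "int p * a \<in> X" using partition_onD1[OF less.prems(1)] by blast
    obtain j n where jn: "n \<ge> 1" "X = {int p * j ..< int p * j + int p * int n}"
      using less.prems(2) X(1) unfolding is_rod_def by blast
    have Xsub: "X \<subseteq> {int p * a ..< int p * a + int p * int k}"
      using partition_onD1[OF less.prems(1)] X(1) by blast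
    have "int p * j \<in> X" using jn assms by simp
    then have "int p * j \<ge> int p * a" using Xsub by auto
    moreover have "int p * j \<le> int p * a" using X(2) jn by simp
    ultimately have "int p * j = int p * a" by linarith
    then have ja: "j = a" using assms by auto
    have "int p * j + int p * int n - 1 \<in> X" using jn assms by simp
    then have "int p * a + int p * int n - 1 < int p * a + int p * int k" using Xsub ja by auto
    then have "int p * int n \<le> int p * int k" by simp
    then have nk: "n \<le> k" using assms by (simp add: mult_le_cancel_left_pos)
    define Q' where "Q' = Q - {X}"
    have QQ: "Q = insert X Q'" using X(1) Q'_def by auto
    have dj: "disjnt X (\<Union>Q')"
    proof -
      have "disjoint Q" using partition_onD2[OF less.prems(1)] .
      then have "\<And>Y. Y \<in> Q' \<Longrightarrow> X \<inter> Y = {}"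
        using pairwiseD[of disjnt Q X] X(1) unfolding Q'_def disjnt_def by auto
      then show ?thesis unfolding disjnt_def by auto
    qed
    have "partition_on ({int p * a ..< int p * a + int p * int k} - X) Q'"
      using less.prems(1) unfolding QQ partition_on_insert[OF dj] by simp
    moreover have "{int p * a ..< int p * a + int p * int k} - X
        = {int p * (a + int n) ..< int p * (a + int n) + int p * int (k - n)}"
      using jn ja nk by (auto simp: algebra_simps of_nat_diff)
    ultimately have P': "partition_on {int p * (a + int n) ..< int p * (a + int n) + int p * int (k - n)} Q'"
      by simp
    have "k - n < k" using jn False by simp
    from less.IH[OF this P'] less.prems(2) obtain ns where
      ns: "pos ns" "sum_list ns = k - n" "Q' = rods_of p (a + int n) ns" unfolding Q'_def by auto
    show ?thesis
      by (intro exI[of _ "n # ns"]) (use ns jn ja nk QQ in auto)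
  qed
qed

lemma rods_head_notin:
  assumes "p \<ge> 1" "0 < n" "pos ns"
  shows "{int p * a ..< int p * a + int p * int n} \<notin> rods_of p (a + int n) ns"
proof
  let ?H = "{int p * a ..< int p * a + int p * int n}"
  assume "?H \<in> rods_of p (a + int n) ns"
  from rods_of_sub[OF assms(1) _ this] assms
  have "?H \<subseteq> {int p * (a + int n) ..}" by auto
  moreover have "int p * a \<in> ?H" using assms by simp
  ultimately have "int p * a \<ge> int p * (a + int n)" by blast
  moreover have "int p * int n > 0" using assms by simp
  ultimately show False by (simp add: algebra_simps)
qed

lemma rods_of_inj:
  assumes "p \<ge> 1"
  shows "pos xs \<Longrightarrow> pos ys \<Longrightarrow> rods_of p a xs = rods_of p a ys \<Longrightarrow> xs = ys"
proof (induction xs arbitrary: a ys)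
  case Nil
  then show ?case by (cases ys) auto
next
  case (Cons x xs)
  then obtain y ys' where ys: "ys = y # ys'" by (cases ys) auto
  let ?Hx = "{int p * a ..< int p * a + int p * int x}"
  let ?Hy = "{int p * a ..< int p * a + int p * int y}"
  have "?Hx \<in> rods_of p a ys" unfolding Cons.prems(3)[symmetric] by simp
  then have "?Hx \<in> insert ?Hy (rods_of p (a + int y) ys')" using ys by simp
  moreover have "?Hx \<notin> rods_of p (a + int y) ys'"
  proof
    assume "?Hx \<in> rods_of p (a + int y) ys'"
    from rods_of_sub[OF assms _ this] Cons.prems ys
    have "?Hx \<subseteq> {int p * (a + int y) ..}" by auto
    moreover have "int p * a \<in> ?Hx" using assms Cons.prems by simp
    ultimately have "int p * a \<ge> int p * (a + int y)" by blast
    moreover have "int p * int y > 0" using assms Cons.prems ys by simp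
    ultimately show False by (simp add: algebra_simps)
  qed
  ultimately have "?Hx = ?Hy" by simp
  then have "int p * int x = int p * int y" using assms Cons.prems ys
    by (subst (asm) atLeastLessThan_eq_iff) auto
  then have xy: "x = y" using assms by simp
  have "rods_of p (a + int x) xs = rods_of p (a + int x) ys'"
  proof -
    have "insert ?Hx (rods_of p (a + int x) xs) = insert ?Hx (rods_of p (a + int x) ys')"
      using Cons.prems ys xy by simp
    moreover have "?Hx \<notin> rods_of p (a + int x) xs" using rods_head_notin assms Cons.prems by simp
    moreover have "?Hx \<notin> rods_of p (a + int x) ys'" using rods_head_notin assms Cons.prems ys xy by simp
    ultimately show ?thesis by (metis insert_ident)
  qed
  then have "xs = ys'" using Cons.IH Cons.prems ys by simp
  then show ?case using xy ys by simp
qed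

lemma rods_of_take:
  "rods_of p j ns = (\<lambda>k. {int p * j + int p * int (sum_list (take k ns)) ..<
       int p * j + int p * int (sum_list (take (Suc k) ns))}) ` {..<length ns}"
proof (induction ns arbitrary: j)
  case Nil then show ?case by simp
next
  case (Cons n ns)
  show ?case
    unfolding lessThan_Suc_eq_insert_0 length_Cons image_insert image_image
    by (simp add: Cons.IH algebra_simps)
qed

lemma cyl_eq: "cyl p j ns = {P \<in> rodpart_inf p. rods_of p j ns \<subseteq> P}"
  unfolding cyl_def rods_of_take by auto

lemma part_eq:
  assumes "partition_on S P" "X \<in> P" "Y \<in> P" "t \<in> X" "t \<in> Y"
  shows "X = Y"
  using pairwiseD[OF partition_onD2[OF assms(1)] assms(2,3)] assms(4,5)
  by (auto simp: disjnt_def)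

lemma Min_ivl[simp]: "c < d \<Longrightarrow> Min {c..<(d::int)} = c"
  by (rule Min_eqI) auto

lemma key:
  fixes x y :: int
  assumes part: "partition_on S P" and ivl: "\<forall>X\<in>P. \<exists>c d. c < d \<and> X = {c..<d}"
    and Q: "partition_on {x..<y} Q" and sub: "{x..<y} \<subseteq> S" and xy: "x < y" and yS: "y \<in> S"
  shows "((\<exists>X\<in>P. x = Min X) \<and> (\<exists>X\<in>P. y = Min X) \<and> restr P {x..<y} = Q) \<longleftrightarrow> Q \<subseteq> P"
proof
  assume A: "(\<exists>X\<in>P. x = Min X) \<and> (\<exists>X\<in>P. y = Min X) \<and> restr P {x..<y} = Q"
  then obtain Xx Xy where Xx: "Xx \<in> P" "x = Min Xx" and Xy: "Xy \<in> P" "y = Min Xy" by blast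
  obtain cx dx where cx: "cx < dx" "Xx = {cx..<dx}" using ivl Xx(1) by blast
  obtain cy dy where cy: "cy < dy" "Xy = {cy..<dy}" using ivl Xy(1) by blast
  have xXx: "x \<in> Xx" and mx: "x = cx" using Xx cx by auto
  have yXy: "y \<in> Xy" and my: "y = cy" using Xy cy by auto
  show "Q \<subseteq> P"
  proof
    fix Y assume "Y \<in> Q"
    then obtain Z where Z: "Y = Z \<inter> {x..<y}" "Z \<in> P" "Z \<inter> {x..<y} \<noteq> {}"
      using A unfolding restr_def by blast
    obtain c d where cd: "c < d" "Z = {c..<d}" using ivl Z(2) by blast
    obtain t where t: "t \<in> Z" "x \<le> t" "t < y" using Z(3) by auto
    have "x \<le> c"
    proof (rule ccontr)
      assume "\<not> x \<le> c"
      then have "x \<in> Z" using t cd by auto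
      then have "Z = Xx" using part_eq[OF part Z(2) Xx(1) _ xXx] by simp
      then show False using cd cx mx \<open>\<not> x \<le> c\<close> by (simp add: atLeastLessThan_eq_iff)
    qed
    moreover have "d \<le> y"
    proof (rule ccontr)
      assume "\<not> d \<le> y"
      then have "y \<in> Z" using t cd by auto
      then have "Z = Xy" using part_eq[OF part Z(2) Xy(1) _ yXy] by simp
      then have "c = y" using cd cy my by (simp add: atLeastLessThan_eq_iff)
      then show False using t cd by auto
    qed
    ultimately have "Z \<subseteq> {x..<y}" using cd by auto
    then show "Y \<in> P" using Z by (simp add: Int_absorb2)
  qed
next
  assume QP: "Q \<subseteq> P"
  have U: "\<Union>Q = {x..<y}" using partition_onD1[OF Q] by simp
  have "x \<in> \<Union>Q" using U xy by simp
  then obtain Y where Y: "Y \<in> Q" "x \<in> Y" by blast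
  obtain c d where cd: "c < d" "Y = {c..<d}" using ivl Y(1) QP by blast
  have "Y \<subseteq> {x..<y}" using U Y(1) by blast
  then have "c = x" using cd Y(2) by auto
  then have m1: "\<exists>X\<in>P. x = Min X" using Y QP cd by (intro bexI[of _ Y]) auto
  have "y \<in> \<Union>P" using partition_onD1[OF part] yS by simp
  then obtain Z where Z: "Z \<in> P" "y \<in> Z" by blast
  obtain c' d' where cd': "c' < d'" "Z = {c'..<d'}" using ivl Z(1) by blast
  have "c' = y"
  proof (rule ccontr)
    assume "c' \<noteq> y"
    then have "y - 1 \<in> Z" using Z(2) cd' by auto
    moreover have "y - 1 \<in> \<Union>Q" using U xy by simp
    then obtain W where W: "W \<in> Q" "y - 1 \<in> W" by blast
    ultimately have "Z = W" using part_eq[OF part Z(1) _ _ W(2)] QP by blast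
    then have "y \<in> \<Union>Q" using W Z by blast
    then show False using U by simp
  qed
  then have m2: "\<exists>X\<in>P. y = Min X" using Z cd' by (intro bexI[of _ Z]) auto
  have "restr P {x..<y} = Q"
  proof
    show "restr P {x..<y} \<subseteq> Q"
    proof
      fix V assume "V \<in> restr P {x..<y}"
      then obtain X where X: "V = X \<inter> {x..<y}" "X \<in> P" "X \<inter> {x..<y} \<noteq> {}"
        unfolding restr_def by blast
      then obtain t where t: "t \<in> X" "t \<in> {x..<y}" by blast
      then obtain W where W: "W \<in> Q" "t \<in> W" using U by blast
      then have "X = W" using part_eq[OF part X(2) _ t(1)] QP by blast
      moreover have "W \<subseteq> {x..<y}" using U W by blast
      ultimately show "V \<in> Q" using X W by (simp add: Int_absorb2)
    qed
  next
    show "Q \<subseteq> restr P {x..<y}"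
    proof
      fix W assume W: "W \<in> Q"
      have "W \<subseteq> {x..<y}" using U W by blast
      moreover have "W \<noteq> {}" using partition_onD3[OF Q] W by blast
      ultimately show "W \<in> restr P {x..<y}" unfolding restr_def using W QP
        by (auto intro!: exI[of _ W] simp: Int_absorb2)
    qed
  qed
  then show "(\<exists>X\<in>P. x = Min X) \<and> (\<exists>X\<in>P. y = Min X) \<and> restr P {x..<y} = Q"
    using m1 m2 by blast
qed

lemma rod_ivl: "p \<ge> 1 \<Longrightarrow> is_rod p X \<Longrightarrow> \<exists>c d. c < d \<and> X = {c..<d}"
  unfolding is_rod_def by force

lemma event_inf_eq:
  assumes "p \<ge> 1" "r < s" "partition_on {int p * int r ..< int p * int s} Q"
  shows "event_inf p r s Q = {P \<in> rodpart_inf p. Q \<subseteq> P}"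
proof -
  have "P \<in> event_inf p r s Q \<longleftrightarrow> P \<in> {P \<in> rodpart_inf p. Q \<subseteq> P}" for P
  proof (cases "P \<in> rodpart_inf p")
    case True
    then have "partition_on UNIV P" "\<forall>X\<in>P. \<exists>c d. c < d \<and> X = {c..<d}"
      using rod_ivl[OF assms(1)] unfolding rodpart_inf_def by auto
    from key[OF this assms(3)] assms True show ?thesis
      unfolding event_inf_def renewal_inf_def by auto
  next
    case False then show ?thesis unfolding event_inf_def by auto
  qed
  then show ?thesis by blast
qed

lemma event_fin_eq:
  assumes "p \<ge> 1" "r < s" "s < N" "partition_on {int p * int r ..< int p * int s} Q"
  shows "event_fin p N r s Q = {P \<in> rodpart_fin p N. Q \<subseteq> P}"
proof -
  have rN: "int p * int r \<noteq> int p * int N" "int p * int s \<noteq> int p * int N" using assms by auto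
  have "P \<in> event_fin p N r s Q \<longleftrightarrow> P \<in> {P \<in> rodpart_fin p N. Q \<subseteq> P}" for P
  proof (cases "P \<in> rodpart_fin p N")
    case True
    then have "partition_on {0..<int p * int N} P" "\<forall>X\<in>P. \<exists>c d. c < d \<and> X = {c..<d}"
      using rod_ivl[OF assms(1)] unfolding rodpart_fin_def by auto
    moreover have "{int p * int r ..< int p * int s} \<subseteq> {0..<int p * int N}" using assms by auto
    moreover have "int p * int s \<in> {0..<int p * int N}" using assms by auto
    ultimately have "((\<exists>X\<in>P. int p * int r = Min X) \<and> (\<exists>X\<in>P. int p * int s = Min X)
        \<and> restr P {int p * int r..<int p * int s} = Q) \<longleftrightarrow> Q \<subseteq> P"
      using key[of "{0..<int p * int N}" P "int p * int r" "int p * int s" Q] assms by auto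
    then show ?thesis using True rN
      unfolding event_fin_def renewal_fin_def by auto
  next
    case False then show ?thesis unfolding event_fin_def by auto
  qed
  then show ?thesis by blast
qed

lemma append_pos_sum:
  "pos xs \<Longrightarrow> pos xs' \<Longrightarrow> xs @ ys = xs' @ ys' \<Longrightarrow> sum_list xs = sum_list xs' \<Longrightarrow> xs = xs' \<and> ys = ys'"
proof (induction xs arbitrary: xs')
  case Nil
  then have "xs' = []" by (cases xs') auto
  then show ?case using Nil by simp
next
  case (Cons x xs)
  then obtain x' t where "xs' = x' # t" by (cases xs') auto
  then show ?case using Cons by auto
qed

lemma compositions_pos: "ns \<in> compositions n \<longleftrightarrow> pos ns \<and> sum_list ns = n"
  unfolding compositions_def pos_def by auto

lemma fin_bij:
  assumes p: "p \<ge> 1" and rs: "r < s" "s \<le> N" and Qd: "Q = rods_of p (int r) qs" "pos qs" "sum_list qs = s - r"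
  shows "bij_betw (\<lambda>(as, bs). rods_of p 0 (as @ qs @ bs)) (compositions r \<times> compositions (N - s))
     {P \<in> rodpart_fin p N. Q \<subseteq> P}"
proof (rule bij_betwI')
  fix z z' assume z: "z \<in> compositions r \<times> compositions (N - s)" and z': "z' \<in> compositions r \<times> compositions (N - s)"
  obtain as bs where zz: "z = (as, bs)" by (cases z)
  obtain as' bs' where zz': "z' = (as', bs')" by (cases z')
  show "((case z of (as, bs) \<Rightarrow> rods_of p 0 (as @ qs @ bs)) = (case z' of (as, bs) \<Rightarrow> rods_of p 0 (as @ qs @ bs))) = (z = z')"
  proof
    assume "(case z of (as, bs) \<Rightarrow> rods_of p 0 (as @ qs @ bs)) = (case z' of (as, bs) \<Rightarrow> rods_of p 0 (as @ qs @ bs))"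
    then have "rods_of p 0 (as @ qs @ bs) = rods_of p 0 (as' @ qs @ bs')" using zz zz' by simp
    then have "as @ qs @ bs = as' @ qs @ bs'"
      using rods_of_inj[OF p] z z' zz zz' Qd by (auto simp: compositions_pos)
    then have "as = as' \<and> qs @ bs = qs @ bs'"
      using append_pos_sum[of as as' "qs @ bs" "qs @ bs'"] z z' zz zz' by (auto simp: compositions_pos)
    then show "z = z'" using zz zz' by simp
  qed simp
next
  fix z assume z: "z \<in> compositions r \<times> compositions (N - s)"
  obtain as bs where zz: "z = (as, bs)" by (cases z)
  have pz: "pos (as @ qs @ bs)" and sz: "sum_list (as @ qs @ bs) = N"
    using z zz Qd rs by (auto simp: compositions_pos)
  have part: "partition_on {0..<int p * int N} (rods_of p 0 (as @ qs @ bs))"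
    using rods_of_partition[OF p pz, of 0, unfolded sz] by simp
  have rods: "\<forall>X\<in>rods_of p 0 (as @ qs @ bs). is_rod p X" using rods_of_sub[OF p pz] by blast
  have "rods_of p 0 (as @ qs @ bs) = rods_of p 0 as \<union> (rods_of p (int r) qs \<union> rods_of p (int r + int (sum_list qs)) bs)"
    using z zz by (simp add: rods_of_append compositions_pos)
  then have "Q \<subseteq> rods_of p 0 (as @ qs @ bs)" using Qd by blast
  then show "(case z of (as, bs) \<Rightarrow> rods_of p 0 (as @ qs @ bs)) \<in> {P \<in> rodpart_fin p N. Q \<subseteq> P}"
    using zz part rods unfolding rodpart_fin_def by simp
next
  fix P assume "P \<in> {P \<in> rodpart_fin p N. Q \<subseteq> P}"
  then have part: "partition_on {0..<int p * int N} P" and rods: "\<forall>X\<in>P. is_rod p X" and QP: "Q \<subseteq> P"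
    unfolding rodpart_fin_def by auto
  let ?T = "{int p * int r ..< int p * int s}"
  have prN: "int p * int r \<le> int p * int N" "int p * int s \<le> int p * int N" "int p * int r \<le> int p * int s"
    using rs by (auto intro!: mult_left_mono)
  have ps0: "0 \<le> int p * int s" by simp
  have Qpart: "partition_on ?T Q" using rods_of_partition[OF p Qd(2), of "int r"] Qd rs
    by (simp add: of_nat_diff algebra_simps)
  have UQ: "\<Union>Q = ?T" using partition_onD1[OF Qpart] by simp
  define A where "A = {X \<in> P. X \<subseteq> {0..<int p * int r}}"
  define B where "B = {X \<in> P. X \<subseteq> {int p * int s..<int p * int N}}"
  have cover: "X \<in> Q \<or> X \<in> A \<or> X \<in> B" if X: "X \<in> P" for X
  proof -
    obtain c d where cd: "c < d" "X = {c..<d}" using rod_ivl[OF p] rods X by blast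
    have XS: "X \<subseteq> {0..<int p * int N}" using partition_onD1[OF part] X by blast
    show ?thesis
    proof (cases "X \<inter> ?T = {}")
      case False
      then obtain t where t: "t \<in> X" "t \<in> ?T" by blast
      then obtain W where "W \<in> Q" "t \<in> W" using UQ by blast
      then have "X = W" using part_eq[OF part X _ t(1)] QP by blast
      then show ?thesis using \<open>W \<in> Q\<close> by simp
    next
      case True
      have "d \<le> int p * int r \<or> c \<ge> int p * int s"
      proof (rule ccontr)
        assume "\<not> (d \<le> int p * int r \<or> c \<ge> int p * int s)"
        then have "max c (int p * int r) \<in> X \<inter> ?T" using cd rs p by auto
        then show False using True by blast
      qed
      then show ?thesis using XS cd X unfolding A_def B_def by auto
    qed
  qed
  have Qsub: "W \<subseteq> ?T" if "W \<in> Q" for W using UQ that by blast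
  have Apart: "partition_on {0..<int p * int r} A"
  proof (rule partition_onI)
    show "\<Union>A = {0..<int p * int r}"
    proof
      show "\<Union>A \<subseteq> {0..<int p * int r}" unfolding A_def by blast
      show "{0..<int p * int r} \<subseteq> \<Union>A"
      proof
        fix t assume t: "t \<in> {0..<int p * int r}"
        then have "0 \<le> t \<and> t < int p * int N" using prN ps0 unfolding atLeastLessThan_iff by linarith
        then have "t \<in> {0..<int p * int N}" by simp
        then obtain X where X: "X \<in> P" "t \<in> X" using partition_onD1[OF part] by blast
        have "X \<notin> Q" using Qsub X t by fastforce
        moreover have "X \<notin> B" using X t prN unfolding B_def by auto
        ultimately have "X \<in> A" using cover X by blast
        then show "t \<in> \<Union>A" using X by blast
      qed
    qed
  next
    fix X Y assume "X \<in> A" "Y \<in> A" "X \<noteq> Y"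
    then show "disjnt X Y" using pairwiseD[OF partition_onD2[OF part]] unfolding A_def by auto
  next
    show "{} \<notin> A" using partition_onD3[OF part] unfolding A_def by auto
  qed
  have Bpart: "partition_on {int p * int s..<int p * int N} B"
  proof (rule partition_onI)
    show "\<Union>B = {int p * int s..<int p * int N}"
    proof
      show "\<Union>B \<subseteq> {int p * int s..<int p * int N}" unfolding B_def by blast
      show "{int p * int s..<int p * int N} \<subseteq> \<Union>B"
      proof
        fix t assume t: "t \<in> {int p * int s..<int p * int N}"
        then have "0 \<le> t \<and> t < int p * int N" using prN ps0 unfolding atLeastLessThan_iff by linarith
        then have "t \<in> {0..<int p * int N}" by simp
        then obtain X where X: "X \<in> P" "t \<in> X" using partition_onD1[OF part] by blast
        have "X \<notin> Q" using Qsub X t by fastforce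
        moreover have "X \<notin> A" using X t prN unfolding A_def by auto
        ultimately have "X \<in> B" using cover X by blast
        then show "t \<in> \<Union>B" using X by blast
      qed
    qed
  next
    fix X Y assume "X \<in> B" "Y \<in> B" "X \<noteq> Y"
    then show "disjnt X Y" using pairwiseD[OF partition_onD2[OF part]] unfolding B_def by auto
  next
    show "{} \<notin> B" using partition_onD3[OF part] unfolding B_def by auto
  qed
  have "partition_on {int p * 0 ..< int p * 0 + int p * int r} A" using Apart by simp
  from rods_decomp[OF p this] rods obtain as where as: "pos as" "sum_list as = r" "A = rods_of p 0 as"
    unfolding A_def by auto
  have "partition_on {int p * int s ..< int p * int s + int p * int (N - s)} B" using Bpart rs
    by (simp add: of_nat_diff algebra_simps)
  from rods_decomp[OF p this] rods obtain bs where bs: "pos bs" "sum_list bs = N - s" "B = rods_of p (int s) bs"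
    unfolding B_def by auto
  have "P = A \<union> Q \<union> B" using cover unfolding A_def B_def using QP by blast
  also have "\<dots> = rods_of p 0 (as @ qs @ bs)"
    using as bs Qd rs by (simp add: rods_of_append of_nat_diff Un_assoc)
  finally show "\<exists>z\<in>compositions r \<times> compositions (N - s). P = (case z of (as, bs) \<Rightarrow> rods_of p 0 (as @ qs @ bs))"
    using as bs by (intro bexI[of _ "(as, bs)"]) (auto simp: compositions_pos)
qed

lemma prod_list_nonneg: "(\<forall>x\<in>set xs. (0::real) \<le> f x) \<Longrightarrow> 0 \<le> prod_list (map f xs)"
  by (induction xs) auto

lemma lpw_nonneg: "0 \<le> lpw p R l n"
  unfolding lpw_def laugh_alpha_def laugh_r_def
  by (simp add: sum_nonneg)

lemma laugh_a1_pos: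
  assumes "R > 0" "l > 0" "m 0 = 0"
  shows "laugh_a p R l 1 m \<noteq> 0"
proof -
  have e: "laugh_pairs 1 = {}" by (auto simp: laugh_pairs_def)
  have e2: "{0<..<Suc 0} = ({}::nat set)" by auto
  have c: "laugh_coeff p 1 m = (if m 0 = 0 then 1 else 0)"
    unfolding laugh_coeff_def e laugh_exp_def by (subst PiE_empty_domain) (simp add: e2 less_one)
  have k: "laugh_kappa p R l 1 > 0" using assms unfolding laugh_kappa_def by simp
  have o: "laugh_orbnorm R l k > 0" for k using assms unfolding laugh_orbnorm_def by simp
  show ?thesis unfolding laugh_a_def c using assms k o[of "m 0"] by simp
qed

lemma lpw1_pos:
  assumes "R > 0" "l > 0"
  shows "lpw p R l 1 > 0"
proof -
  define m0 :: "nat \<Rightarrow> nat" where "m0 = (\<lambda>i. if i \<in> {0..<1} then 0 else undefined)"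
  have m0T: "m0 \<in> laugh_tuples p 1" unfolding laugh_tuples_def m0_def by auto
  have "{k. tuple_renewal p 1 m0 k} = {0, 1}"
    unfolding tuple_renewal_def m0_def by (auto simp: take_Cons')
  then have mem: "m0 \<in> {m \<in> laugh_tuples p 1. {k. tuple_renewal p 1 m k} = {0, 1}}" using m0T by simp
  have fin: "finite {m \<in> laugh_tuples p 1. {k. tuple_renewal p 1 m k} = {0, 1}}"
    unfolding laugh_tuples_def by (rule finite_subset[of _ "{0..<1} \<rightarrow>\<^sub>E {0..p*1-p}"]) (auto intro: finite_PiE)
  have "(laugh_a p R l 1 m0)^2 > 0" using laugh_a1_pos[OF assms, of m0 p] by (simp add: m0_def)
  also have "(laugh_a p R l 1 m0)^2 \<le> (\<Sum>m \<in> {m \<in> laugh_tuples p 1. {k. tuple_renewal p 1 m k} = {0, 1}}. (laugh_a p R l 1 m)^2)"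
    by (rule member_le_sum[OF mem _ fin]) simp
  finally have "laugh_alpha p R l 1 > 0" unfolding laugh_alpha_def by simp
  then show ?thesis unfolding lpw_def laugh_r_def by simp
qed

lemma length_le_sum: "pos xs \<Longrightarrow> length xs \<le> sum_list xs"
  by (induction xs) auto

lemma compositions_finite: "finite (compositions k)"
proof (rule finite_subset)
  show "compositions k \<subseteq> {xs. set xs \<subseteq> {0..k} \<and> length xs \<le> k}"
  proof
    fix xs assume "xs \<in> compositions k"
    then have "pos xs" "sum_list xs = k" by (auto simp: compositions_pos)
    moreover have "\<forall>x\<in>set xs. x \<le> sum_list xs" using member_le_sum_list by blast
    ultimately show "xs \<in> {xs. set xs \<subseteq> {0..k} \<and> length xs \<le> k}"
      using length_le_sum by auto
  qed
  show "finite {xs. set xs \<subseteq> {0..k} \<and> length xs \<le> k}"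
    by (rule finite_lists_length_le) simp
qed

lemma lu_nonneg: "0 \<le> lu p R l k"
  unfolding lu_def by (intro sum_nonneg prod_list_nonneg) (simp add: lpw_nonneg)

lemma lu_pos:
  assumes "R > 0" "l > 0" "k \<ge> 1"
  shows "lu p R l k > 0"
proof -
  have mem: "replicate k 1 \<in> compositions k" by (auto simp: compositions_def sum_list_replicate)
  have "0 < lpw p R l 1 ^ k" using lpw1_pos[OF assms(1,2)] by simp
  also have "\<dots> = prod_list (map (lpw p R l) (replicate k 1))" by (simp add: prod_list_replicate)
  also have "\<dots> \<le> lu p R l k" unfolding lu_def
    by (rule member_le_sum[OF mem _ compositions_finite]) (intro prod_list_nonneg, simp add: lpw_nonneg)
  finally show ?thesis .
qed

lemma PN_formula:
  assumes p: "p \<ge> 1" and rs: "r < s" "s < N" and Qd: "Q = rods_of p (int r) qs" "pos qs" "sum_list qs = s - r"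
  shows "PN_prob p R l N (event_fin p N r s Q)
     = lu p R l r * prod_list (map (lpw p R l) qs) * lu p R l (N - s) / lu p R l N"
proof -
  have Qpart: "partition_on {int p * int r ..< int p * int s} Q"
    using rods_of_partition[OF p Qd(2), of "int r"] Qd rs by (simp add: of_nat_diff algebra_simps)
  have E: "event_fin p N r s Q = {P \<in> rodpart_fin p N. Q \<subseteq> P}"
    by (rule event_fin_eq[OF p rs Qpart])
  have bij: "bij_betw (\<lambda>(as, bs). rods_of p 0 (as @ qs @ bs)) (compositions r \<times> compositions (N - s))
     {P \<in> rodpart_fin p N. Q \<subseteq> P}" using fin_bij[OF p rs(1) _ Qd] rs by simp
  let ?W = "\<lambda>P. (\<Prod>X\<in>P. lpw p R l (card X div p)) / lu p R l N"
  have "PN_prob p R l N (event_fin p N r s Q) = sum ?W {P \<in> rodpart_fin p N. Q \<subseteq> P}"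
    unfolding PN_prob_def E by (intro sum.cong) auto
  also have "\<dots> = (\<Sum>z\<in>compositions r \<times> compositions (N - s). ?W ((\<lambda>(as, bs). rods_of p 0 (as @ qs @ bs)) z))"
    by (rule sum.reindex_bij_betw[OF bij, symmetric])
  also have "\<dots> = (\<Sum>z\<in>compositions r \<times> compositions (N - s).
       (prod_list (map (lpw p R l) (fst z)) * prod_list (map (lpw p R l) (snd z))) * (prod_list (map (lpw p R l) qs) / lu p R l N))"
  proof (intro sum.cong refl)
    fix z assume z: "z \<in> compositions r \<times> compositions (N - s)"
    obtain as bs where zz: "z = (as, bs)" by (cases z)
    have "pos (as @ qs @ bs)" using z zz Qd by (auto simp: compositions_pos)
    then show "?W ((\<lambda>(as, bs). rods_of p 0 (as @ qs @ bs)) z) = (prod_list (map (lpw p R l) (fst z)) * prod_list (map (lpw p R l) (snd z))) * (prod_list (map (lpw p R l) qs) / lu p R l N)"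
      using zz rods_of_weight[OF p, where ns="as @ qs @ bs" and a=0 and f="lpw p R l"] by (simp add: algebra_simps)
  qed
  also have "\<dots> = (\<Sum>z\<in>compositions r \<times> compositions (N - s).
       prod_list (map (lpw p R l) (fst z)) * prod_list (map (lpw p R l) (snd z))) * (prod_list (map (lpw p R l) qs) / lu p R l N)"
    by (rule sum_distrib_right[symmetric])
  also have "(\<Sum>z\<in>compositions r \<times> compositions (N - s).
       prod_list (map (lpw p R l) (fst z)) * prod_list (map (lpw p R l) (snd z))) = lu p R l r * lu p R l (N - s)"
    unfolding lu_def sum_product sum.cartesian_product by (simp add: case_prod_beta)
  finally show ?thesis by simp
qed

lemma final_ineq:
  fixes a b n c w B m e :: real
  assumes "w \<ge> 0" "m > 0" "a \<ge> m" "b \<ge> m" "n \<ge> m" "b \<le> B" "c \<ge> 0"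
    "\<bar>a - c\<bar> \<le> e" "\<bar>b - c\<bar> \<le> e" "\<bar>n - c\<bar> \<le> e"
  shows "\<bar>a * w * b / n - c * w\<bar> \<le> ((B + 2 * c) / m^2) * (a * w * b / n) * e"
proof -
  have e0: "e \<ge> 0" using assms(8) by linarith
  have n0: "n > 0" using assms by linarith
  have t1: "\<bar>(a - c) * b\<bar> \<le> e * B" unfolding abs_mult
    using assms by (intro mult_mono) auto
  have t2: "\<bar>c * (b - c)\<bar> \<le> c * e" unfolding abs_mult using assms by (simp add: mult_left_mono)
  have t3: "\<bar>c * (c - n)\<bar> \<le> c * e" unfolding abs_mult using assms by (simp add: mult_left_mono)
  have "a * b - c * n = (a - c) * b + c * (b - c) + c * (c - n)" by (simp add: algebra_simps)
  then have D: "\<bar>a * b - c * n\<bar> \<le> e * (B + 2 * c)" using t1 t2 t3 by (simp add: algebra_simps)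
  have "a * w * b / n - c * w = (w / n) * (a * b - c * n)" using n0 by (simp add: field_simps)
  then have "\<bar>a * w * b / n - c * w\<bar> = (w / n) * \<bar>a * b - c * n\<bar>" using assms n0 by (simp add: abs_mult)
  also have "\<dots> \<le> (w / n) * (e * (B + 2 * c))" using D assms n0 by (intro mult_left_mono) auto
  also have "\<dots> \<le> (w / n) * (e * (B + 2 * c)) * (a * b / m^2)"
  proof -
    have "m^2 \<le> a * b" unfolding power2_eq_square using assms by (intro mult_mono) auto
    then have "1 \<le> a * b / m^2" using assms by simp
    moreover have "0 \<le> (w / n) * (e * (B + 2 * c))" using assms n0 e0 by auto
    ultimately show ?thesis using mult_left_mono[of 1 "a * b / m^2" "(w / n) * (e * (B + 2 * c))"] by simp
  qed
  also have "\<dots> = ((B + 2 * c) / m^2) * (a * w * b / n) * e" by (simp add: field_simps)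
  finally show ?thesis .
qed

theorem lemma5p6:
  fixes p :: nat and R l :: real
  assumes "p \<ge> 1" and "R > 0" and "l > 0"
    and "convergent (\<lambda>N. ln (laugh_C p R l N) / real N)"
    and "lpw p R l sums 1"
    and "summable (\<lambda>n. real n * lpw p R l n)"
    and "lu p R l \<longlonglongrightarrow> 1 / lmu p R l"
  shows "\<exists>K::real. \<forall>(N::nat) (d::nat) (r::nat) (s::nat) Q M.
     1 \<le> d \<and> r < s \<and> d \<le> r \<and> s + d \<le> N
     \<and> partition_on {int p * int r ..< int p * int s} Q \<and> (\<forall>X\<in>Q. is_rod p X)
     \<and> stationary_renewal p R l M
     \<longrightarrow> \<bar>PN_prob p R l N (event_fin p N r s Q) - measure M (event_inf p r s Q)\<bar>
         \<le> K * PN_prob p R l N (event_fin p N r s Q)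
             * (SUP k\<in>{d..}. \<bar>lu p R l k - 1 / lmu p R l\<bar>)"
proof -
  note p = assms(1)
  define u where "u = lu p R l"
  define c where "c = 1 / lmu p R l"
  have "(\<Sum>n\<in>{1}. real n * lpw p R l n) \<le> lmu p R l"
    unfolding lmu_def by (rule sum_le_suminf[OF assms(6)]) (auto intro!: mult_nonneg_nonneg lpw_nonneg)
  then have "lmu p R l > 0" using lpw1_pos[OF assms(2,3), of p] by simp
  then have c0: "c > 0" unfolding c_def by simp
  have ulim: "u \<longlonglongrightarrow> c" using assms(7) unfolding u_def c_def .
  obtain B where B: "B > 0" "\<forall>n. norm (u n) \<le> B"
    using convergent_imp_Bseq[OF convergentI[OF ulim]] BseqE by blast
  have "eventually (\<lambda>k. c / 2 < u k) sequentially" using order_tendstoD(1)[OF ulim, of "c / 2"] c0 by simp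
  then obtain K0 where K0: "\<And>k. k \<ge> K0 \<Longrightarrow> c / 2 < u k" unfolding eventually_sequentially by blast
  define m where "m = Min (insert (c / 2) (u ` {1..<K0}))"
  have upos: "k \<ge> 1 \<Longrightarrow> u k > 0" for k unfolding u_def using lu_pos[OF assms(2,3)] by simp
  have m0: "m > 0" unfolding m_def using c0 upos by (subst Min_gr_iff) auto
  have um: "k \<ge> 1 \<Longrightarrow> m \<le> u k" for k
  proof (cases "k \<ge> K0")
    case True
    have "m \<le> c / 2" unfolding m_def by (rule Min_le) auto
    then show ?thesis using K0[OF True] by simp
  next
    case False
    assume "k \<ge> 1"
    then show ?thesis unfolding m_def using False by (intro Min_le) auto
  qed
  have uB: "u k \<le> B" for k using B(2) by (auto simp: abs_le_iff)
  show ?thesis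
  proof (intro exI[of _ "(B + 2 * c) / m^2"] allI impI)
    fix N d r s Q M
    assume H: "1 \<le> d \<and> r < s \<and> d \<le> r \<and> s + d \<le> N
     \<and> partition_on {int p * int r ..< int p * int s} Q \<and> (\<forall>X\<in>Q. is_rod p X)
     \<and> stationary_renewal p R l M"
    then have rs: "r < s" "s < N" "d \<le> r" "d \<le> N - s" "1 \<le> d" and
      Qp: "partition_on {int p * int r ..< int p * int s} Q" and Qr: "\<forall>X\<in>Q. is_rod p X"
      and SR: "stationary_renewal p R l M" by auto
    have "partition_on {int p * int r ..< int p * int r + int p * int (s - r)} Q"
      using Qp rs by (simp add: of_nat_diff algebra_simps)
    from rods_decomp[OF p this Qr] obtain qs where
      Qd: "pos qs" "sum_list qs = s - r" "Q = rods_of p (int r) qs" by blast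
    define w where "w = prod_list (map (lpw p R l) qs)"
    have w0: "w \<ge> 0" unfolding w_def by (intro prod_list_nonneg) (simp add: lpw_nonneg)
    have PN: "PN_prob p R l N (event_fin p N r s Q) = u r * w * u (N - s) / u N"
      unfolding u_def w_def by (rule PN_formula[OF p rs(1,2) Qd(3,1,2)])
    have "event_inf p r s Q = cyl p (int r) qs"
      using event_inf_eq[OF p rs(1) Qp] unfolding cyl_eq Qd(3) by simp
    moreover have "qs \<noteq> []" using Qd rs by auto
    ultimately have PI: "measure M (event_inf p r s Q) = c * w"
      using SR Qd(1) unfolding stationary_renewal_def c_def w_def pos_def by auto
    define e where "e = (SUP k\<in>{d..}. \<bar>lu p R l k - 1 / lmu p R l\<bar>)"
    have bdd: "bdd_above ((\<lambda>k. \<bar>lu p R l k - 1 / lmu p R l\<bar>) ` {d..})"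
    proof (rule bdd_aboveI2)
      fix k show "\<bar>lu p R l k - 1 / lmu p R l\<bar> \<le> B + c"
      proof -
        have "\<bar>lu p R l k\<bar> \<le> B" using B(2)[rule_format, of k] unfolding u_def by simp
        moreover have "1 / lmu p R l > 0" using c0 unfolding c_def .
        moreover have "\<And>x y::real. \<bar>x\<bar> \<le> B \<Longrightarrow> y > 0 \<Longrightarrow> \<bar>x - y\<bar> \<le> B + y" by linarith
        ultimately show ?thesis unfolding c_def by blast
      qed
    qed
    have ue: "k \<ge> d \<Longrightarrow> \<bar>u k - c\<bar> \<le> e" for k
      unfolding u_def c_def e_def by (rule cSUP_upper[OF _ bdd]) simp
    have "\<bar>u r * w * u (N - s) / u N - c * w\<bar> \<le> ((B + 2 * c) / m^2) * (u r * w * u (N - s) / u N) * e"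
      by (rule final_ineq) (use w0 m0 um uB c0 ue rs in auto)
    then show "\<bar>PN_prob p R l N (event_fin p N r s Q) - measure M (event_inf p r s Q)\<bar>
         \<le> (B + 2 * c) / m^2 * PN_prob p R l N (event_fin p N r s Q)
             * (SUP k\<in>{d..}. \<bar>lu p R l k - 1 / lmu p R l\<bar>)"
      unfolding PN PI e_def .
  qed
qed

end
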